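(* For integers $k\ge0$ and $q\ge2$, \[ \sum_{n=0}^\infty\frac{P_k(H_n,H_n^{(2)},\dots,H_n^{(k)})}{(n+1)(n+2)\cdots(n+q)}=\frac{1}{(q-1)!}\cdot\frac{1}{(q-1)^{k+1}}. \]
   Context: For integers $r\ge1$ and $n\ge0$, $H_n^{(r)}=\sum_{j=1}^n j^{-r}$ (so $H_0^{(r)}=0$) and $H_n=H_n^{(1)}$. $P_0=1$ and for $n\ge1$, $P_n(y_1,\dots,y_n)=\sum_{m_1+2m_2+\cdots=n}\frac{(-1)^{m_2+m_4+\cdots}}{m_1!m_2!\cdots}\prod_{i\ge1}(y_i/i)^{m_i}$ (sum over tuples of nonnegative integers), i.e. $P_n(p_1,\dots,p_n)=e_n$ expresses the elementary symmetric function via power sums. *)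

theory Defs
  imports Complex_Main
begin

definition gen_harm :: "nat \<Rightarrow> nat \<Rightarrow> real" where
  "gen_harm r n = (\<Sum>j=1..n. 1 / real j ^ r)"

text \<open>Index set for P_n: tuples (m_1, m_2, ...) of naturals, represented as functions
  nat => nat supported on {1..n}, with m_1 + 2 m_2 + ... = n.\<close>
definition P_tuples :: "nat \<Rightarrow> (nat \<Rightarrow> nat) set" where
  "P_tuples n = {m. (\<forall>i. m i \<noteq> 0 \<longrightarrow> i \<in> {1..n}) \<and> (\<Sum>i=1..n. i * m i) = n}"

definition P_poly :: "nat \<Rightarrow> (nat \<Rightarrow> real) \<Rightarrow> real" where
  "P_poly n y = (\<Sum>m\<in>P_tuples n.
      (-1) ^ (\<Sum>i\<in>{i\<in>{1..n}. even i}. m i) / (\<Prod>i=1..n. fact (m i))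
      * (\<Prod>i=1..n. (y i / real i) ^ m i))"

end

theory Submission
  imports Defs "HOL-Analysis.Analysis"
begin


definition W :: "nat set \<Rightarrow> (nat\<Rightarrow>real) \<Rightarrow> (nat\<Rightarrow>nat) \<Rightarrow> real" where
 "W S y m = (-1) ^ (\<Sum>i\<in>{i\<in>S. even i}. m i) / (\<Prod>i\<in>S. fact (m i)) * (\<Prod>i\<in>S. (y i / real i) ^ m i)"

lemma P_poly_W: "P_poly n y = (\<Sum>m\<in>P_tuples n. W {1..n} y m)"
  unfolding P_poly_def W_def by simp

lemma W_mono:
  assumes "finite S'" "S \<subseteq> S'" "\<forall>i\<in>S'-S. m i = 0"
  shows "W S y m = W S' y m"
proof -
  have "finite S" using assms finite_subset by blast
  have 1: "(\<Sum>i\<in>{i\<in>S. even i}. m i) = (\<Sum>i\<in>{i\<in>S'. even i}. m i)"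
    apply (rule sum.mono_neutral_left) using assms by force+
  have 2: "(\<Prod>i\<in>S. fact (m i) :: real) = (\<Prod>i\<in>S'. fact (m i))"
    by (rule prod.mono_neutral_left) (use assms in auto)
  have 3: "(\<Prod>i\<in>S. (y i / real i) ^ m i) = (\<Prod>i\<in>S'. (y i / real i) ^ m i)"
    by (rule prod.mono_neutral_left) (use assms in auto)
  show ?thesis unfolding W_def 1 2 3 ..
qed

lemma W_step:
  assumes "finite S" "i \<in> S" "i \<ge> 1"
  shows "real i * real (Suc (m i)) * W S y (m(i := Suc (m i))) = (-1)^(i-1) * y i * W S y m"
proof -
  let ?m = "m(i := Suc (m i))"
  have s: "(\<Sum>j\<in>{j\<in>S. even j}. ?m j) = (\<Sum>j\<in>{j\<in>S. even j}. m j) + (if even i then 1 else 0)"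
  proof -
    have "(\<Sum>j\<in>{j\<in>S. even j}. ?m j) = (\<Sum>j\<in>{j\<in>S. even j}. m j + (if j = i then 1 else 0))"
      by (rule sum.cong) auto
    also have "\<dots> = (\<Sum>j\<in>{j\<in>S. even j}. m j) + (if even i then 1 else 0)"
      using assms by (simp add: sum.distrib)
    finally show ?thesis .
  qed
  have f: "(\<Prod>j\<in>S. fact (?m j) :: real) = (\<Prod>j\<in>S. fact (m j)) * real (Suc (m i))"
  proof -
    have "(\<Prod>j\<in>S. fact (?m j) :: real) = fact (?m i) * (\<Prod>j\<in>S-{i}. fact (?m j))"
      using assms by (simp add: prod.remove)
    also have "(\<Prod>j\<in>S-{i}. fact (?m j) :: real) = (\<Prod>j\<in>S-{i}. fact (m j))"
      by (rule prod.cong) auto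
    also have "(\<Prod>j\<in>S. fact (m j) :: real) = fact (m i) * (\<Prod>j\<in>S-{i}. fact (m j))"
      using assms by (simp add: prod.remove)
    ultimately show ?thesis by simp
  qed
  have p: "(\<Prod>j\<in>S. (y j / real j) ^ ?m j) = (\<Prod>j\<in>S. (y j / real j) ^ m j) * (y i / real i)"
  proof -
    have "(\<Prod>j\<in>S. (y j / real j) ^ ?m j) = (y i / real i) ^ ?m i * (\<Prod>j\<in>S-{i}. (y j / real j) ^ ?m j)"
      using assms by (simp add: prod.remove)
    also have "(\<Prod>j\<in>S-{i}. (y j / real j) ^ ?m j) = (\<Prod>j\<in>S-{i}. (y j / real j) ^ m j)"
      by (rule prod.cong) auto
    also have "(\<Prod>j\<in>S. (y j / real j) ^ m j) = (y i / real i) ^ m i * (\<Prod>j\<in>S-{i}. (y j / real j) ^ m j)"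
      using assms by (simp add: prod.remove)
    ultimately show ?thesis by simp
  qed
  have F: "(\<Prod>j\<in>S. fact (m j) :: real) \<noteq> 0" using assms(1) by (simp add: prod_zero_iff)
  have sg: "((-1::real) ^ (if even i then 1 else 0)) = (-1)^(i-1)"
    using assms by (cases "even i") (auto simp: power_0 elim!: evenE oddE)
  have i0: "real i \<noteq> 0" using assms by simp
  have c0: "real (Suc (m i)) \<noteq> 0" by simp
  have alg: "\<And>F i c s \<sigma> Q y. F \<noteq> 0 \<Longrightarrow> (i::real) \<noteq> 0 \<Longrightarrow> c \<noteq> 0 \<Longrightarrow>
     i * c * (s * \<sigma> / (F * c) * (Q * (y / i))) = \<sigma> * y * (s / F * Q)"
    by (simp add: field_simps)
  show ?thesis unfolding W_def s f p power_add sg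
    by (rule alg[OF F i0 c0])
qed

lemma tup_support: "m \<in> P_tuples k \<Longrightarrow> m j \<noteq> 0 \<Longrightarrow> j \<in> {1..k}"
  unfolding P_tuples_def by blast

lemma tup_weight: "m \<in> P_tuples k \<Longrightarrow> (\<Sum>i=1..k. i * m i) = k"
  unfolding P_tuples_def by blast

lemma tup_bound: assumes "m \<in> P_tuples k" shows "m j \<le> k"
proof (cases "m j = 0")
  case False
  then have j: "j \<in> {1..k}" using tup_support assms by blast
  have "j * m j \<le> (\<Sum>i=1..k. i * m i)" by (rule member_le_sum) (use j in auto)
  also have "\<dots> = k" using tup_weight assms by blast
  moreover have "m j \<le> j * m j" using j by simp
  ultimately show ?thesis by linarith
qed simp

lemma finite_tuples: "finite (P_tuples k)"
proof -
  have "P_tuples k \<subseteq> {f. \<forall>x. (x \<in> {0..k} \<longrightarrow> f x \<in> {0..k}) \<and> (x \<notin> {0..k} \<longrightarrow> f x = 0)}"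
    using tup_bound tup_support by fastforce
  then show ?thesis using finite_set_of_finite_funs[of "{0..k}" "{0..k}" 0] finite_subset by blast
qed

lemma wt_shift:
  assumes "j \<in> {1..k}"
  shows "(\<Sum>l=1..k. l * (m(j := Suc (m j))) l) = (\<Sum>l=1..k. l * m l) + j"
proof -
  have "(\<Sum>l=1..k. l * (m(j := Suc (m j))) l) = (\<Sum>l=1..k. l * m l + (if l = j then j else 0))"
    by (rule sum.cong) auto
  also have "\<dots> = (\<Sum>l=1..k. l * m l) + j" using assms by (simp add: sum.distrib)
  finally show ?thesis .
qed

lemma newton_i:
  assumes i: "i \<in> {1..k}"
  shows "(\<Sum>m\<in>P_tuples k. real (i * m i) * W {1..k} y m) = (-1)^(i-1) * y i * P_poly (k-i) y"
proof -
  define f where "f = (\<lambda>m'::nat\<Rightarrow>nat. m'(i := Suc (m' i)))"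
  have inj: "inj_on f (P_tuples (k-i))"
  proof
    fix a b assume "f a = f b"
    then have "\<forall>j. f a j = f b j" by simp
    then show "a = b" unfolding f_def by (metis fun_upd_apply nat.inject ext)
  qed
  have img: "f ` P_tuples (k-i) = {m\<in>P_tuples k. m i \<noteq> 0}"
  proof (rule set_eqI, rule iffI)
    fix m assume "m \<in> f ` P_tuples (k-i)"
    then obtain m' where m': "m' \<in> P_tuples (k-i)" and m: "m = f m'" by blast
    have "(\<Sum>l=1..k. l * m' l) = (\<Sum>l=1..k-i. l * m' l)"
    proof (rule sum.mono_neutral_right)
      show "\<forall>l\<in>{1..k} - {1..k-i}. l * m' l = 0"
        using tup_support[OF m'] by (metis Diff_iff mult_is_0)
    qed auto
    also have "\<dots> = k - i" using tup_weight[OF m'] .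
    finally have "(\<Sum>l=1..k. l * m l) = k" unfolding m f_def wt_shift[OF i] using i by simp
    moreover have "\<forall>j. m j \<noteq> 0 \<longrightarrow> j \<in> {1..k}"
      using tup_support[OF m'] i unfolding m f_def by (auto, fastforce)
    moreover have "m i \<noteq> 0" unfolding m f_def by simp
    ultimately show "m \<in> {m\<in>P_tuples k. m i \<noteq> 0}" unfolding P_tuples_def by blast
  next
    fix m assume "m \<in> {m\<in>P_tuples k. m i \<noteq> 0}"
    then have m: "m \<in> P_tuples k" and mi: "m i \<noteq> 0" by auto
    define m' where "m' = m(i := m i - 1)"
    have fm: "f m' = m" unfolding f_def m'_def using mi by auto
    have w1: "(\<Sum>l=1..k. l * m' l) + i = k"
      using wt_shift[OF i, of m'] tup_weight[OF m] fm unfolding f_def by simp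
    have sup: "\<forall>j. m' j \<noteq> 0 \<longrightarrow> j \<in> {1..k-i}"
    proof (intro allI impI)
      fix j assume "m' j \<noteq> 0"
      then have "m j \<noteq> 0" unfolding m'_def by (auto split: if_splits)
      then have j: "j \<in> {1..k}" using tup_support[OF m] by blast
      have "j * m' j \<le> (\<Sum>l=1..k. l * m' l)" by (rule member_le_sum) (use j in auto)
      moreover have "j \<le> j * m' j" using \<open>m' j \<noteq> 0\<close> by (cases "m' j") auto
      ultimately have "j \<le> k - i" using w1 by linarith
      then show "j \<in> {1..k-i}" using j by auto
    qed
    have "(\<Sum>l=1..k-i. l * m' l) = (\<Sum>l=1..k. l * m' l)"
      by (rule sum.mono_neutral_left) (use sup in auto)
    then have "(\<Sum>l=1..k-i. l * m' l) = k - i" using w1 by simp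
    then have "m' \<in> P_tuples (k-i)" using sup unfolding P_tuples_def by blast
    then show "m \<in> f ` P_tuples (k-i)" using fm by blast
  qed
  have "(\<Sum>m\<in>P_tuples k. real (i * m i) * W {1..k} y m) =
        (\<Sum>m\<in>{m\<in>P_tuples k. m i \<noteq> 0}. real (i * m i) * W {1..k} y m)"
    by (rule sum.mono_neutral_right) (auto simp: finite_tuples)
  also have "\<dots> = (\<Sum>m'\<in>P_tuples (k-i). real (i * f m' i) * W {1..k} y (f m'))"
    unfolding img[symmetric] by (rule sum.reindex[OF inj, unfolded comp_def])
  also have "\<dots> = (\<Sum>m'\<in>P_tuples (k-i). (-1)^(i-1) * y i * W {1..k-i} y m')"
  proof (rule sum.cong[OF refl])
    fix m' assume m': "m' \<in> P_tuples (k-i)"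
    have "real (i * f m' i) * W {1..k} y (f m') = (-1)^(i-1) * y i * W {1..k} y m'"
      using W_step[of "{1..k}" i m' y] i unfolding f_def by (simp add: algebra_simps)
    also have "W {1..k} y m' = W {1..k-i} y m'"
    proof (rule W_mono[symmetric])
      show "\<forall>j\<in>{1..k}-{1..k-i}. m' j = 0" using tup_support[OF m'] by (metis Diff_iff)
    qed auto
    finally show "real (i * f m' i) * W {1..k} y (f m') = (-1)^(i-1) * y i * W {1..k-i} y m'" .
  qed
  also have "\<dots> = (-1)^(i-1) * y i * P_poly (k-i) y"
    unfolding P_poly_W by (simp add: sum_distrib_left)
  finally show ?thesis .
qed

lemma newton:
  "real k * P_poly k y = (\<Sum>i=1..k. (-1)^(i-1) * y i * P_poly (k-i) y)"
proof -
  have "real k * P_poly k y = (\<Sum>m\<in>P_tuples k. real k * W {1..k} y m)"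
    unfolding P_poly_W by (simp add: sum_distrib_left)
  also have "\<dots> = (\<Sum>m\<in>P_tuples k. \<Sum>i=1..k. real (i * m i) * W {1..k} y m)"
  proof (rule sum.cong[OF refl])
    fix m assume "m \<in> P_tuples k"
    then have "real k = (\<Sum>i=1..k. real (i * m i))" using tup_weight
      by (metis of_nat_sum)
    then show "real k * W {1..k} y m = (\<Sum>i=1..k. real (i * m i) * W {1..k} y m)"
      by (simp add: sum_distrib_right)
  qed
  also have "\<dots> = (\<Sum>i=1..k. \<Sum>m\<in>P_tuples k. real (i * m i) * W {1..k} y m)"
    by (rule sum.swap)
  also have "\<dots> = (\<Sum>i=1..k. (-1)^(i-1) * y i * P_poly (k-i) y)"
    by (rule sum.cong[OF refl]) (rule newton_i)
  finally show ?thesis .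
qed

lemma P_poly_0: "P_poly 0 y = 1"
proof -
  have "P_tuples 0 = {\<lambda>_. 0}" unfolding P_tuples_def by auto
  then show ?thesis unfolding P_poly_def by simp
qed



lemma alg_newton:
  fixes G y :: "nat \<Rightarrow> real" and a :: real
  assumes N: "\<And>k. real k * G k = (\<Sum>i=1..k. (-1)^(i-1) * y i * G (k-i))"
  defines "R \<equiv> \<lambda>j. G j + (if j = 0 then 0 else a * G (j-1))"
  shows "real k * R k = (\<Sum>i=1..k. (-1)^(i-1) * (y i + a^i) * R (k-i))"
proof (cases k)
  case 0 then show ?thesis by simp
next
  case (Suc m)
  define X4 where "X4 = (\<Sum>i=1..m. (-1)^(i-1) * a^(i+1) * G (m-i))"
  have split: "(\<Sum>i=1..Suc m. (-1)^(i-1) * (y i + a^i) * R (Suc m-i)) =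
      (\<Sum>i=1..Suc m. (-1)^(i-1) * y i * G (Suc m-i)) + (\<Sum>i=1..Suc m. (-1)^(i-1) * a^i * G (Suc m-i))
      + (\<Sum>i=1..Suc m. (-1)^(i-1) * (y i + a^i) * (if Suc m - i = 0 then 0 else a * G (Suc m - i - 1)))"
    unfolding R_def by (simp add: sum.distrib[symmetric] algebra_simps del: sum.cl_ivl_Suc)
  have X2: "(\<Sum>i=1..Suc m. (-1)^(i-1) * a^i * G (Suc m-i)) = a * G m - X4"
  proof -
    have "(\<Sum>i=1..Suc m. (-1)^(i-1) * a^i * G (Suc m-i)) = a * G m + (\<Sum>i=Suc 1..Suc m. (-1)^(i-1) * a^i * G (Suc m-i))"
      by (subst sum.atLeast_Suc_atMost) auto
    also have "(\<Sum>i=Suc 1..Suc m. (-1)^(i-1) * a^i * G (Suc m-i)) = (\<Sum>i=1..m. (-1)^i * a^(i+1) * G (m-i))"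
      by (subst sum.atLeast_Suc_atMost_Suc_shift) simp
    also have "\<dots> = - X4" unfolding X4_def sum_negf[symmetric]
      by (rule sum.cong) (auto simp: power_eq_if)
    finally show ?thesis by simp
  qed
  have X3: "(\<Sum>i=1..Suc m. (-1)^(i-1) * (y i + a^i) * (if Suc m - i = 0 then 0 else a * G (Suc m - i - 1)))
       = a * (real m * G m) + X4"
  proof -
    have "(\<Sum>i=1..Suc m. (-1)^(i-1) * (y i + a^i) * (if Suc m - i = 0 then 0 else a * G (Suc m - i - 1)))
        = (\<Sum>i=1..m. (-1)^(i-1) * (y i + a^i) * (a * G (m - i)))"
      by (simp add: Suc_diff_le)
    also have "\<dots> = a * (\<Sum>i=1..m. (-1)^(i-1) * y i * G (m - i)) + X4"
      unfolding X4_def by (simp add: sum_distrib_left sum.distrib[symmetric] algebra_simps del: sum.cl_ivl_Suc)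
    also have "(\<Sum>i=1..m. (-1)^(i-1) * y i * G (m - i)) = real m * G m" using N[of m] by simp
    finally show ?thesis .
  qed
  show ?thesis unfolding Suc split X2 X3 N[of "Suc m", symmetric] unfolding R_def
    by (simp add: algebra_simps)
qed



fun E :: "nat \<Rightarrow> nat \<Rightarrow> real" where
  "E 0 n = 1"
| "E (Suc k) 0 = 0"
| "E (Suc k) (Suc n) = E (Suc k) n + E k n / real (Suc n)"

lemma E_nonneg: "E k n \<ge> 0"
  by (induction k n rule: E.induct) auto

lemma gen_harm_Suc: "gen_harm r (Suc n) = gen_harm r n + (1 / real (Suc n)) ^ r"
  unfolding gen_harm_def by (simp add: power_one_over)

lemma P_harm: "P_poly k (\<lambda>r. gen_harm r n) = E k n"
proof (induction n arbitrary: k)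
  case 0
  show ?case
  proof (cases k)
    case 0 then show ?thesis by (simp add: P_poly_0)
  next
    case (Suc m)
    have "real k * P_poly k (\<lambda>r. gen_harm r 0) = 0"
      by (subst newton) (simp add: gen_harm_def)
    then show ?thesis using Suc by simp
  qed
next
  case (Suc n)
  define a where "a = 1 / real (Suc n)"
  define G where "G = (\<lambda>j. E j n)"
  define y where "y = (\<lambda>r. gen_harm r n)"
  have N: "\<And>k. real k * G k = (\<Sum>i=1..k. (-1)^(i-1) * y i * G (k-i))"
    unfolding G_def y_def Suc.IH[symmetric] by (rule newton)
  have ER: "E j (Suc n) = G j + (if j = 0 then 0 else a * G (j-1))" for j
    unfolding G_def a_def by (cases j) auto
  have y': "(\<lambda>r. gen_harm r (Suc n)) = (\<lambda>r. y r + a ^ r)"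
    unfolding y_def a_def gen_harm_Suc ..
  show ?case
  proof (induction k rule: less_induct)
    case (less k)
    show ?case
    proof (cases k)
      case 0 then show ?thesis by (simp add: P_poly_0)
    next
      case (Suc m)
      have "real k * P_poly k (\<lambda>r. gen_harm r (Suc n))
          = (\<Sum>i=1..k. (-1)^(i-1) * (y i + a^i) * P_poly (k-i) (\<lambda>r. gen_harm r (Suc n)))"
        unfolding y' by (rule newton)
      also have "\<dots> = (\<Sum>i=1..k. (-1)^(i-1) * (y i + a^i) * E (k-i) (Suc n))"
        by (rule sum.cong[OF refl]) (subst less, auto)
      also have "\<dots> = real k * E k (Suc n)"
        unfolding ER using alg_newton[OF N, where a=a and k=k] by simp
      finally show ?thesis using Suc by simp
    qed
  qed
qed



lemma series_step:
  fixes T B A :: "nat \<Rightarrow> real"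
  assumes Bs: "B sums b" and Bn: "\<And>n. B n \<ge> 0" and Tn: "\<And>n. T n \<ge> 0" and An: "\<And>n. A n \<ge> 0"
    and al: "\<alpha> > 0" and eq: "\<And>n. \<alpha> * T n = B n + A n - A (Suc n)"
    and c: "c > 0" and TA: "\<And>n. T n * (real n + c) = A n"
  shows "T sums ((A 0 + b) / \<alpha>)"
proof -
  have part: "\<alpha> * (\<Sum>n<N. T n) = (\<Sum>n<N. B n) + A 0 - A N" for N
    by (induction N) (auto simp: algebra_simps eq)
  have Ble: "(\<Sum>n<N. B n) \<le> b" for N
    using sum_le_suminf[of B "{..<N}"] Bs Bn sums_unique[OF Bs] sums_summable by fastforce
  have "(\<Sum>n<N. T n) \<le> (b + A 0) / \<alpha>" for N
  proof -
    have "\<alpha> * (\<Sum>n<N. T n) \<le> b + A 0" using part[of N] Ble[of N] An[of N] by linarith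
    then show ?thesis using al by (simp add: field_simps)
  qed
  then have sT: "summable T" by (intro summableI_nonneg_bounded[OF Tn])
  define s where "s = suminf T"
  have Ts: "T sums s" using sT s_def summable_sums by blast
  define L where "L = b + A 0 - \<alpha> * s"
  have AL: "A \<longlonglongrightarrow> L"
  proof -
    have "(\<lambda>N. (\<Sum>n<N. B n) + A 0 - \<alpha> * (\<Sum>n<N. T n)) \<longlonglongrightarrow> b + A 0 - \<alpha> * s"
      using Bs Ts unfolding sums_def by (intro tendsto_intros) auto
    moreover have "(\<lambda>N. (\<Sum>n<N. B n) + A 0 - \<alpha> * (\<Sum>n<N. T n)) = A"
      using part by (auto simp: fun_eq_iff)
    ultimately show ?thesis unfolding L_def by simp
  qed
  have L0: "L \<ge> 0" by (rule LIMSEQ_le_const[OF AL]) (use An in auto)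
  have "L = 0"
  proof (rule ccontr)
    assume "L \<noteq> 0"
    then have Lp: "L > 0" using L0 by simp
    have ev: "eventually (\<lambda>N. A N > L/2) sequentially"
      using order_tendstoD(1)[OF AL, of "L/2"] Lp by simp
    have ev2: "eventually (\<lambda>N. norm (1 / (real N + 1)) \<le> (2 * (1 + c) / L) * T N) sequentially"
      using ev
    proof eventually_elim
      case (elim N)
      have pos: "real N + c > 0" using c by simp
      have "T N = A N / (real N + c)" using TA[of N] pos by (simp add: field_simps)
      moreover have "(L/2) / (real N + c) \<le> A N / (real N + c)"
        by (rule divide_right_mono) (use elim pos in auto)
      ultimately have "T N \<ge> (L/2) / (real N + c)" by simp
      moreover have "1 / (real N + 1) \<le> (1 + c) / (real N + c)"
        using c pos by (simp add: field_simps)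
      moreover have "(2 * (1 + c) / L) * ((L/2) / (real N + c)) = (1 + c) / (real N + c)"
      proof -
        have "(2 * (1 + c) / L) * (L/2) = 1 + c" using Lp by simp
        then show ?thesis by (metis times_divide_eq_right)
      qed
      moreover have "(2 * (1 + c) / L) * ((L/2) / (real N + c)) \<le> (2 * (1 + c) / L) * T N"
        by (rule mult_left_mono) (use calculation(1) Lp c in auto)
      ultimately show ?case by simp

    qed
    have "summable (\<lambda>N. 1 / (real N + 1))"
      by (rule summable_comparison_test_ev[OF ev2]) (intro summable_mult sT)
    then have "summable (\<lambda>N. inverse (real (Suc N)))" by (simp add: inverse_eq_divide add.commute)
    then have "summable (\<lambda>N. inverse (real N))" using summable_Suc_iff by blast
    then show False using not_summable_harmonic by blast
  qed
  then have "s = (A 0 + b) / \<alpha>" using al unfolding L_def by (simp add: field_simps)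
  then show ?thesis using Ts by simp
qed



theorem theorem6:
  fixes k q :: nat
  assumes "q \<ge> 2"
  shows "(\<lambda>n. P_poly k (\<lambda>r. gen_harm r n) / (\<Prod>j=1..q. real (n + j)))
           sums (1 / fact (q - 1) * (1 / real (q - 1) ^ (k + 1)))"
proof -
  obtain p where qp: "q = Suc p" and p1: "p \<ge> 1" using assms by (cases q) auto
  define D where "D = (\<lambda>n. \<Prod>j=1..q. real (n + j))"
  define Dp where "Dp = (\<lambda>n. \<Prod>j=1..p. real (n + j))"
  have Dpos: "D n > 0" for n unfolding D_def by (rule prod_pos) auto
  have Dppos: "Dp n > 0" for n unfolding Dp_def by (rule prod_pos) auto
  have Da: "D n = Dp n * (real n + real q)" for n
    unfolding D_def Dp_def qp by simp
  have Db: "D n = real (Suc n) * Dp (Suc n)" for n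
  proof -
    have "D n = real (n + 1) * (\<Prod>j=Suc 1..q. real (n + j))"
      unfolding D_def by (subst prod.atLeast_Suc_atMost) (use qp in auto)
    also have "(\<Prod>j=Suc 1..q. real (n + j)) = Dp (Suc n)"
      unfolding Dp_def qp by (subst prod.atLeast_Suc_atMost_Suc_shift) (simp add: comp_def algebra_simps)
    finally show ?thesis by simp
  qed
  have Dp0: "Dp 0 = fact p" unfolding Dp_def fact_prod by (simp add: of_nat_prod)
  define T where "T = (\<lambda>k n. E k n / D n)"
  define A where "A = (\<lambda>k n. E k n / Dp n)"
  have nq: "real n + real q \<noteq> 0" for n using qp by simp
  have TA: "T k n * (real n + real q) = A k n" for k n
    unfolding T_def A_def Da using nq[of n] by simp
  have A1: "A k n = E k n * (real n + real q) / D n" for k n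
    unfolding A_def Da using nq[of n] by simp
  have A2: "A k (Suc n) = E k (Suc n) * real (Suc n) / D n" for k n
  proof -
    have "real (Suc n) \<noteq> 0" by simp
    then show ?thesis unfolding A_def Db by (metis mult.commute mult_divide_mult_cancel_left)
  qed
  have pq: "real p = real q - 1" using qp by simp
  have eq0: "real p * T 0 n = 0 + A 0 n - A 0 (Suc n)" for n
    unfolding T_def A2[of 0 n] A1[of 0 n] pq using Dpos[of n] by (simp add: field_simps add_pos_nonneg)
  have eqS: "real p * T (Suc m) n = T m n + A (Suc m) n - A (Suc m) (Suc n)" for m n
  proof -
    have e: "E (Suc m) (Suc n) * real (Suc n) = E (Suc m) n * real (Suc n) + E m n"
      by (simp add: field_simps del: of_nat_Suc)
    show ?thesis unfolding T_def A2[of "Suc m" n] A1[of "Suc m" n] e pq using Dpos[of n]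
      by (simp add: field_simps)
  qed
  have pos: "real p > 0" using p1 by simp
  have Tn: "T k n \<ge> 0" for k n unfolding T_def using E_nonneg Dpos by (simp add: less_imp_le)
  have An: "A k n \<ge> 0" for k n unfolding A_def using E_nonneg Dppos by (simp add: less_imp_le)
  have main: "T k sums (1 / fact p * (1 / real p ^ (k + 1)))" for k
  proof (induction k)
    case 0
    have "T 0 sums ((A 0 0 + 0) / real p)"
      by (rule series_step[where B="\<lambda>_. 0" and A="A 0" and c="real q"]) (use eq0 pos Tn An TA qp in auto)
    then show ?case unfolding A_def Dp0 by simp
  next
    case (Suc m)
    have "T (Suc m) sums ((A (Suc m) 0 + 1 / fact p * (1 / real p ^ (m + 1))) / real p)"
      by (rule series_step[where A="A (Suc m)" and c="real q", OF Suc]) (use eqS pos Tn An TA qp in auto)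
    then show ?case unfolding A_def by (simp add: field_simps)
  qed
  show ?thesis using main[of k] unfolding T_def D_def P_harm qp by simp
qed


end
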